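(* Let $d\ge1$ and let $\{e_j\}_{j=1}^d$ be an orthonormal basis of $\mathbb C^d$. There is a map $F:\mathbb R^{3d-2}\to\mathbb C^d$ (depending on the basis) such that for every $x\in\mathbb C^d$ which is full with respect to $\{e_j\}_{j=1}^d$, $$F\big(\mathcal A_{\{e_j\}}(x)\big)=\frac{\langle e_1,x\rangle}{|\langle e_1,x\rangle|}\,x .$$ That is, the vector $y=\frac{\langle e_1,x\rangle}{|\langle e_1,x\rangle|}x$ is determined by the values $\mathcal A_{\{e_j\}}(x)$.
   Context: $\mathbb C^d$ carries the standard inner product $\langle u,v\rangle=\sum_k u_k\overline{v_k}$. A vector $x$ is called full with respect to a basis $\{e_j\}_{j=1}^d$ if $\langle x,e_j\rangle\ne0$ for all $j$. The measurement vectors are $f_j=e_j$ for $1\le j\le d$, $f_j=e_{j-d}-e_{j-d+1}$ for $d+1\le j\le 2d-1$, and $f_j=e_{j-(2d-1)}-ie_{j-(2d-1)+1}$ for $2d\le j\le 3d-2$; the magnitude measurement map is $\mathcal A_{\{e_j\}}(x)=(|\langle x,f_j\rangle|^2)_{j=1}^{3d-2}\in\mathbb R^{3d-2}$. *)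

theory Defs
  imports "HOL-Analysis.Analysis"
begin

text \<open>Vectors in C^d are represented as complex lists of length d.
  Standard inner product <u,v> = sum_k u_k * conj(v_k).\<close>

definition cinner :: "complex list \<Rightarrow> complex list \<Rightarrow> complex" where
  "cinner u v = (\<Sum>k<length u. u ! k * cnj (v ! k))"

definition orthonormal_basis :: "nat \<Rightarrow> complex list list \<Rightarrow> bool" where
  "orthonormal_basis d es \<longleftrightarrow> length es = d \<and> (\<forall>e\<in>set es. length e = d) \<and>
     (\<forall>i<d. \<forall>j<d. cinner (es ! i) (es ! j) = (if i = j then 1 else 0))"

text \<open>Basis e_j (1-indexed in the paper) is es ! (j-1).\<close>
definition full :: "complex list list \<Rightarrow> complex list \<Rightarrow> bool" where
  "full es x \<longleftrightarrow> (\<forall>e\<in>set es. cinner x e \<noteq> 0)"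

definition vsub :: "complex list \<Rightarrow> complex list \<Rightarrow> complex list" where
  "vsub u v = map2 (-) u v"

definition vscale :: "complex \<Rightarrow> complex list \<Rightarrow> complex list" where
  "vscale c u = map ((*) c) u"

text \<open>Measurement vectors f_1..f_{3d-2} (list index = paper index - 1):
  e_1..e_d, then e_j - e_{j+1} (j=1..d-1), then e_j - i e_{j+1} (j=1..d-1).\<close>
definition meas_vectors :: "complex list list \<Rightarrow> complex list list" where
  "meas_vectors es = es
     @ map (\<lambda>j. vsub (es ! j) (es ! (j+1))) [0..<length es - 1]
     @ map (\<lambda>j. vsub (es ! j) (vscale \<i> (es ! (j+1)))) [0..<length es - 1]"

definition meas_map :: "complex list list \<Rightarrow> complex list \<Rightarrow> real list" where
  "meas_map es x = map (\<lambda>f. (cmod (cinner x f))\<^sup>2) (meas_vectors es)"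

end

theory Submission
  imports Defs "Jordan_Normal_Form.Determinant"
begin

lemma cinner_vsub_right:
  assumes "length u = length x" "length v = length x"
  shows "cinner x (vsub u v) = cinner x u - cinner x v"
  using assms unfolding cinner_def vsub_def
  by (simp add: algebra_simps sum_subtractf)

lemma cinner_vscale_right:
  assumes "length u = length x"
  shows "cinner x (vscale a u) = cnj a * cinner x u"
  using assms unfolding cinner_def vscale_def
  by (simp add: algebra_simps sum_distrib_left)

lemma cinner_vscale_left:
  shows "cinner (vscale a x) u = a * cinner x u"
  unfolding cinner_def vscale_def
  by (simp add: algebra_simps sum_distrib_left)

lemma cinner_vsub_left:
  assumes "length u = length x"
  shows "cinner (vsub x u) e = cinner x e - cinner u e"
  using assms unfolding cinner_def vsub_def
  by (simp add: algebra_simps sum_subtractf)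

lemma cinner_swap:
  assumes "length u = length x"
  shows "cinner u x = cnj (cinner x u)"
  using assms unfolding cinner_def by (simp add: mult.commute)

lemma ortho_complete:
  assumes ob: "orthonormal_basis d es" and lz: "length z = d"
    and orth: "\<forall>i<d. cinner z (es!i) = 0"
  shows "\<forall>k<d. z!k = 0"
proof -
  have les: "length es = d" and le: "\<And>i. i < d \<Longrightarrow> length (es!i) = d"
    using ob unfolding orthonormal_basis_def by auto
  have on: "\<And>i j. i < d \<Longrightarrow> j < d \<Longrightarrow> cinner (es!i) (es!j) = (if i = j then 1 else 0)"
    using ob unfolding orthonormal_basis_def by auto
  define A :: "complex mat" where "A = Matrix.mat d d (\<lambda>(i,k). cnj (es!i!k))"
  define B :: "complex mat" where "B = Matrix.mat d d (\<lambda>(k,j). es!j!k)"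
  have A: "A \<in> carrier_mat d d" and B: "B \<in> carrier_mat d d" unfolding A_def B_def by auto
  have AB: "A * B = 1\<^sub>m d"
  proof (rule eq_matI)
    fix i j assume i: "i < dim_row (1\<^sub>m d)" and j: "j < dim_col (1\<^sub>m d)"
    hence i': "i < d" and j': "j < d" by auto
    have "(A * B) $$ (i,j) = (\<Sum>k<d. cnj (es!i!k) * es!j!k)"
      using i' j' unfolding A_def B_def
      by (simp add: scalar_prod_def Matrix.row_def Matrix.col_def atLeast0LessThan)
    also have "\<dots> = cnj (cinner (es!i) (es!j))"
      unfolding cinner_def using le[OF i'] by (simp add: mult.commute)
    also have "\<dots> = 1\<^sub>m d $$ (i,j)" using on[OF i' j'] i' j' by simp
    finally show "(A * B) $$ (i,j) = 1\<^sub>m d $$ (i,j)" .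
  qed (use A B in auto)
  have BA: "B * A = 1\<^sub>m d" by (rule mat_mult_left_right_inverse[OF A B AB])
  define v :: "complex vec" where "v = Matrix.vec d (\<lambda>k. z!k)"
  have v: "v \<in> carrier_vec d" unfolding v_def by auto
  have Av: "A *\<^sub>v v = 0\<^sub>v d"
  proof (rule eq_vecI)
    fix i assume "i < dim_vec (0\<^sub>v d :: complex vec)"
    hence i': "i < d" by simp
    have "vec_index (A *\<^sub>v v) i = (\<Sum>k<d. cnj (es!i!k) * z!k)"
      using i' unfolding A_def v_def
      by (simp add: scalar_prod_def Matrix.row_def atLeast0LessThan)
    also have "\<dots> = cinner z (es!i)" unfolding cinner_def using lz by (simp add: mult.commute)
    also have "\<dots> = 0" using orth i' by simp
    finally show "vec_index (A *\<^sub>v v) i = vec_index (0\<^sub>v d) i" using i' by simp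
  qed (use A in simp)
  have "v = (B * A) *\<^sub>v v" using BA v by simp
  also have "\<dots> = B *\<^sub>v (A *\<^sub>v v)" using A B v by simp
  also have "\<dots> = 0\<^sub>v d" using Av B
    by (intro eq_vecI) (auto simp: scalar_prod_def)
  finally have "v = 0\<^sub>v d" .
  then show ?thesis unfolding v_def
    by (metis index_vec index_zero_vec(1))
qed

lemma polar:
  fixes a b :: complex
  shows "a * cnj b = Complex (((cmod a)^2 + (cmod b)^2 - (cmod (a - b))^2)/2)
                             (((cmod (a + \<i> * b))^2 - (cmod a)^2 - (cmod b)^2)/2)"
  by (simp add: complex_eq_iff cmod_power2) (simp add: power2_eq_square algebra_simps)

lemma meas_entries:
  assumes les: "length es = d" and le: "\<And>i. i < d \<Longrightarrow> length (es!i) = d"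
    and lx: "length x = d"
  shows "j < d \<Longrightarrow> meas_map es x ! j = (cmod (cinner x (es!j)))^2"
    and "j + 1 < d \<Longrightarrow> meas_map es x ! (d + j) = (cmod (cinner x (es!j) - cinner x (es!(j+1))))^2"
    and "j + 1 < d \<Longrightarrow> meas_map es x ! (d + (d - 1) + j) =
           (cmod (cinner x (es!j) + \<i> * cinner x (es!(j+1))))^2"
proof -
  have lm: "length (meas_vectors es) = d + (d - 1) + (d - 1)"
    unfolding meas_vectors_def using les by simp
  have mm: "\<And>n. n < d + (d - 1) + (d - 1) \<Longrightarrow> meas_map es x ! n = (cmod (cinner x (meas_vectors es ! n)))^2"
    unfolding meas_map_def using lm by simp
  show "j < d \<Longrightarrow> meas_map es x ! j = (cmod (cinner x (es!j)))^2"
    using mm[of j] les unfolding meas_vectors_def by (simp add: nth_append)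
  show "j + 1 < d \<Longrightarrow> meas_map es x ! (d + j) = (cmod (cinner x (es!j) - cinner x (es!(j+1))))^2"
  proof -
    assume j: "j + 1 < d"
    have j1: "j < d - 1" using j by simp
    have "meas_vectors es ! (d + j) = vsub (es ! j) (es ! (j+1))"
      using les j j1 unfolding meas_vectors_def by (simp add: nth_append)
    moreover have "cinner x (vsub (es ! j) (es ! (j+1))) = cinner x (es!j) - cinner x (es!(j+1))"
      using le[of j] le[of "j+1"] lx j by (intro cinner_vsub_right) auto
    ultimately show ?thesis using mm[of "d+j"] j by simp
  qed
  show "j + 1 < d \<Longrightarrow> meas_map es x ! (d + (d - 1) + j) =
           (cmod (cinner x (es!j) + \<i> * cinner x (es!(j+1))))^2"
  proof -
    assume j: "j + 1 < d"
    have j1: "j < d - 1" using j by simp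
    define L1 where "L1 = map (\<lambda>j. vsub (es ! j) (es ! (j+1))) [0..<length es - 1]"
    define L2 where "L2 = map (\<lambda>j. vsub (es ! j) (vscale \<i> (es ! (j+1)))) [0..<length es - 1]"
    have lL1: "length L1 = d - 1" unfolding L1_def using les by simp
    have "meas_vectors es ! (d + (d - 1) + j) = (es @ L1 @ L2) ! (length es + (length L1 + j))"
      unfolding meas_vectors_def L1_def L2_def using les lL1 by (simp add: add.assoc L1_def)
    also have "\<dots> = L2 ! j" by (simp only: nth_append_length_plus)
    also have "\<dots> = vsub (es ! j) (vscale \<i> (es ! (j+1)))" unfolding L2_def using les j1 by simp
    finally have "meas_vectors es ! (d + (d - 1) + j) = vsub (es ! j) (vscale \<i> (es ! (j+1)))" .
    moreover have "cinner x (vsub (es ! j) (vscale \<i> (es ! (j+1)))) = cinner x (es!j) - cinner x (vscale \<i> (es ! (j+1)))"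
      using le[of j] le[of "j+1"] lx j by (intro cinner_vsub_right) (auto simp: vscale_def)
    moreover have "cinner x (vscale \<i> (es ! (j+1))) = - \<i> * cinner x (es!(j+1))"
      using le[of "j+1"] lx j by (subst cinner_vscale_right) auto
    ultimately show ?thesis using mm[of "d+(d-1)+j"] j by simp
  qed
qed

lemma norm_phase:
  fixes z :: complex assumes "z \<noteq> 0"
  shows "cnj z / of_real (cmod z) * z = of_real (cmod z)"
proof -
  have "z * cnj z = of_real ((cmod z)^2)" by (rule complex_norm_square[symmetric])
  moreover have "cmod z \<noteq> 0" using assms by simp
  ultimately show ?thesis by (simp add: field_simps power2_eq_square mult.commute)
qed

lemma step_eq:
  fixes a b k :: complex assumes "a \<noteq> 0"
  shows "k * b = k * a * cnj (a * cnj b) / of_real ((cmod a)^2)"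
proof -
  have "a * cnj a = of_real ((cmod a)^2)" by (rule complex_norm_square[symmetric])
  moreover have "cnj a \<noteq> 0" using assms by simp
  ultimately show ?thesis using assms by (simp add: field_simps)
qed

lemma determined:
  assumes ob: "orthonormal_basis d es"
    and lx: "length x = d" and lx': "length x' = d"
    and fx: "full es x" and fx': "full es x'"
    and mm: "meas_map es x = meas_map es x'"
  shows "vscale (cinner (es ! 0) x / complex_of_real (cmod (cinner (es ! 0) x))) x =
         vscale (cinner (es ! 0) x' / complex_of_real (cmod (cinner (es ! 0) x'))) x'"
proof (cases "d = 0")
  case True thus ?thesis using lx lx' by (simp add: vscale_def)
next
  case False
  have les: "length es = d" and le: "\<And>i. i < d \<Longrightarrow> length (es!i) = d"
    using ob unfolding orthonormal_basis_def by auto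
  define c where "c j = cinner x (es!j)" for j
  define c' where "c' j = cinner x' (es!j)" for j
  have nz: "\<And>j. j < d \<Longrightarrow> c j \<noteq> 0" using fx les unfolding full_def c_def by auto
  have nm: "\<And>j. j < d \<Longrightarrow> cmod (c j) = cmod (c' j)"
  proof -
    fix j assume j: "j < d"
    have "(cmod (c j))^2 = (cmod (c' j))^2"
      using meas_entries(1)[OF les le lx j] meas_entries(1)[OF les le lx' j] mm
      unfolding c_def c'_def by simp
    thus "cmod (c j) = cmod (c' j)" by (simp add: power2_eq_iff_nonneg)
  qed
  have pp: "\<And>j. j + 1 < d \<Longrightarrow> c j * cnj (c (j+1)) = c' j * cnj (c' (j+1))"
  proof -
    fix j assume j: "j + 1 < d"
    have e1: "(cmod (c j - c (j+1)))^2 = (cmod (c' j - c' (j+1)))^2"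
      using meas_entries(2)[OF les le lx j] meas_entries(2)[OF les le lx' j] mm
      unfolding c_def c'_def by simp
    have e2: "(cmod (c j + \<i> * c (j+1)))^2 = (cmod (c' j + \<i> * c' (j+1)))^2"
      using meas_entries(3)[OF les le lx j] meas_entries(3)[OF les le lx' j] mm
      unfolding c_def c'_def by simp
    show "c j * cnj (c (j+1)) = c' j * cnj (c' (j+1))"
      by (subst polar, subst polar) (use e1 e2 nm[of j] nm[of "j+1"] j in simp)
  qed
  define u where "u j = cnj (c 0) / of_real (cmod (c 0)) * c j" for j
  define u' where "u' j = cnj (c' 0) / of_real (cmod (c' 0)) * c' j" for j
  have d0: "0 < d" using False by simp
  have nz': "\<And>j. j < d \<Longrightarrow> c' j \<noteq> 0" using nz nm by (metis norm_eq_zero)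
  have uu: "j < d \<Longrightarrow> u j = u' j" for j
  proof (induction j)
    case 0
    show ?case unfolding u_def u'_def
      using norm_phase[OF nz[OF d0]] norm_phase[OF nz'[OF d0]] nm[OF d0] by simp
  next
    case (Suc j)
    hence j: "j + 1 < d" by simp
    have "u (Suc j) = u j * cnj (c j * cnj (c (j+1))) / of_real ((cmod (c j))^2)"
      unfolding u_def using step_eq[OF nz[of j], of "cnj (c 0) / of_real (cmod (c 0))" "c (j+1)"] j
      by simp
    also have "\<dots> = u' j * cnj (c' j * cnj (c' (j+1))) / of_real ((cmod (c' j))^2)"
      using Suc pp[OF j] nm[of j] j by simp
    also have "\<dots> = u' (Suc j)"
      unfolding u'_def using step_eq[OF nz'[of j], of "cnj (c' 0) / of_real (cmod (c' 0))" "c' (j+1)"] j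
      by simp
    finally show ?case .
  qed
  define y where "y = vscale (cinner (es ! 0) x / complex_of_real (cmod (cinner (es ! 0) x))) x"
  define y' where "y' = vscale (cinner (es ! 0) x' / complex_of_real (cmod (cinner (es ! 0) x'))) x'"
  have s0: "cinner (es ! 0) x = cnj (c 0)" unfolding c_def using le[OF d0] lx by (intro cinner_swap) simp
  have s0': "cinner (es ! 0) x' = cnj (c' 0)" unfolding c'_def using le[OF d0] lx' by (intro cinner_swap) simp
  have yj: "\<And>j. cinner y (es!j) = u j" unfolding y_def u_def s0 c_def
    by (simp add: cinner_vscale_left)
  have yj': "\<And>j. cinner y' (es!j) = u' j" unfolding y'_def u'_def s0' c'_def
    by (simp add: cinner_vscale_left)
  have ly: "length y = d" and ly': "length y' = d" unfolding y_def y'_def vscale_def using lx lx' by auto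
  have "\<forall>i<d. cinner (vsub y y') (es!i) = 0"
  proof (intro allI impI)
    fix i assume i: "i < d"
    have "cinner (vsub y y') (es!i) = cinner y (es!i) - cinner y' (es!i)"
      by (rule cinner_vsub_left) (use ly ly' in simp)
    also have "\<dots> = 0" unfolding yj yj' using uu[OF i] by simp
    finally show "cinner (vsub y y') (es!i) = 0" .
  qed
  moreover have "length (vsub y y') = d" using ly ly' by (simp add: vsub_def)
  ultimately have "\<forall>k<d. vsub y y' ! k = 0" using ortho_complete[OF ob] by blast
  hence "\<forall>k<d. y ! k = y' ! k" using ly ly' by (simp add: vsub_def)
  hence "y = y'" using ly ly' by (intro nth_equalityI) auto
  thus ?thesis unfolding y_def y'_def .
qed

theorem mainTheorem2:
  fixes d :: nat and es :: "complex list list"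
  assumes "d \<ge> 1" and "orthonormal_basis d es"
  shows "\<exists>F :: real list \<Rightarrow> complex list.
           \<forall>x. length x = d \<longrightarrow> full es x \<longrightarrow>
             F (meas_map es x) = vscale (cinner (es ! 0) x / complex_of_real (cmod (cinner (es ! 0) x))) x"
proof -
  define T where "T x = vscale (cinner (es ! 0) x / complex_of_real (cmod (cinner (es ! 0) x))) x" for x
  define F where "F m = (SOME y. \<exists>x. length x = d \<and> full es x \<and> meas_map es x = m \<and> y = T x)" for m
  have "F (meas_map es x) = T x" if lx: "length x = d" and fx: "full es x" for x
  proof -
    have "\<exists>y. \<exists>x'. length x' = d \<and> full es x' \<and> meas_map es x' = meas_map es x \<and> y = T x'"
      using lx fx by blast
    from someI_ex[OF this] obtain x' where x': "length x' = d" "full es x'"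
      "meas_map es x' = meas_map es x" "F (meas_map es x) = T x'"
      unfolding F_def by blast
    have "T x' = T x" unfolding T_def
      by (rule determined[OF assms(2) x'(1) lx x'(2) fx x'(3)])
    thus ?thesis using x'(4) by simp
  qed
  thus ?thesis unfolding T_def by blast
qed

end
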